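(* Fix an integer $m>1$, $L>0$, $T>0$, put $h=L/m$, and let weights $w_0=0$, $w_1,\dots,w_{m-1}$ be given such that the matrix $M^*$ defined below is invertible. Let $F\in\mathbb{R}^{m-1}$ and $(U^0,V^0)\in\mathbb{R}^{m-1}\times\mathbb{R}^{m-1}$ be given, and let $\mathcal{U}_h=(U_h,V_h)\in \mathrm{C}^1([0,T];\mathbb{R}^{m-1}\times\mathbb{R}^{m-1})$ be the solution of $$\mathcal{U}_h'(t)=G(\mathcal{U}_h(t)),\quad t\in[0,T],\qquad \mathcal{U}_h(0)=(U^0,V^0),$$ where for $\mathcal{U}=(U,V)$ with $U=(u_1,\dots,u_{m-1})^{\mathsf T}$, $$G(\mathcal{U})=\Big(\tfrac1h (M^* )^{-1}V,\; -\tfrac1h S^*U+F+\tfrac1h u_1^+e_1\Big).$$ For $N\in\mathbb{N}$ set $\Delta t=T/N$, $t_n=n\Delta t$, and call a sequence $(\mathcal{U}^n)_{n=0}^N$ a Crank–Nicolson sequence if $\mathcal{U}^0=\mathcal{U}_h(0)$ and $$\frac{\mathcal{U}^{n+1}-\mathcal{U}^n}{\Delta t}=\frac12\big(G(\mathcal{U}^{n+1})+G(\mathcal{U}^n)\big),\qquad n=0,\dots,N-1.$$ Then the time discretization error of the Crank–Nicolson method is of order $\Delta t$: there exist constants $\delta>0$ and $K>0$ (which may depend on $h$, $T$ and the data, but not on $\Delta t$) such that for every $N$ with $\Delta t=T/N<\delta$ and every Crank–Nicolson sequence $(\mathcal{U}^n)$, $$\max_{0\le n\le N}\|\mathcal{U}_h(t_n)-\mathcal{U}^n\|\le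 K\,\Delta t .$$
   Context: $\|\cdot\|$ is the Euclidean norm on $\mathbb{R}^{m-1}\times\mathbb{R}^{m-1}$, $s^+=\max(s,0)$, $e_1=(1,0,\dots,0)^{\mathsf T}\in\mathbb{R}^{m-1}$. Hat functions on $[0,L]$ with nodes $kh$: $\varphi_0(x)=1-x/h$ on $[0,h)$ and $0$ for $x\ge h$; for $k=1,\dots,m-1$, $\varphi_k(x)=x/h-k+1$ on $[(k-1)h,kh)$, $k+1-x/h$ on $[kh,(k+1)h)$, $0$ otherwise. The weight function is $w_h(x)=w_j$ for $x\in[jh,(j+1)h)$, $j=0,\dots,m-1$ (with $w_0=0$). The matrices $M^*,S^*\in\mathbb{R}^{(m-1)\times(m-1)}$ are given for $i,k=1,\dots,m-1$ by $M^*_{ik}=\frac1h\int_0^L\varphi_i\varphi_k w_h\,dx$ and $S^*_{ik}=h\int_0^L\varphi_i'\varphi_k'\,dx$. (This ODE is the reformulation of the spatially semi-discrete mass-redistributed contact problem for the 1D wave equation, after elimination of the contact node via $u_0=u_1^+$.) *)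

theory Defs
  imports "HOL-Analysis.Analysis"
begin

text \<open>Vectors in R^(m-1) are represented as functions nat => real, of which only the
  components with index in {1..m-1} are meaningful; matrices as nat => nat => real
  with indices in {1..m-1}.\<close>

type_synonym rvec = "nat \<Rightarrow> real"
type_synonym rmat = "nat \<Rightarrow> nat \<Rightarrow> real"
type_synonym state = "rvec \<times> rvec"

definition hat :: "real \<Rightarrow> nat \<Rightarrow> real \<Rightarrow> real" where
  "hat h k x =
     (if k = 0 then (if 0 \<le> x \<and> x < h then 1 - x / h else 0)
      else if (real k - 1) * h \<le> x \<and> x < real k * h then x / h - real k + 1
      else if real k * h \<le> x \<and> x < (real k + 1) * h then real k + 1 - x / h
      else 0)"

definition wh :: "real \<Rightarrow> (nat \<Rightarrow> real) \<Rightarrow> real \<Rightarrow> real" where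
  "wh h w x = w (nat \<lfloor>x / h\<rfloor>)"

definition Mstar :: "real \<Rightarrow> real \<Rightarrow> (nat \<Rightarrow> real) \<Rightarrow> rmat" where
  "Mstar L h w i k = (1 / h) * integral {0..L} (\<lambda>x. hat h i x * hat h k x * wh h w x)"

definition Sstar :: "real \<Rightarrow> real \<Rightarrow> rmat" where
  "Sstar L h i k = h * integral {0..L} (\<lambda>x. deriv (hat h i) x * deriv (hat h k) x)"

definition is_inverse_on :: "nat \<Rightarrow> rmat \<Rightarrow> rmat \<Rightarrow> bool" where
  "is_inverse_on n A B \<longleftrightarrow>
     (\<forall>i\<in>{1..n}. \<forall>k\<in>{1..n}.
        (\<Sum>j=1..n. A i j * B j k) = (if i = k then 1 else 0) \<and>
        (\<Sum>j=1..n. B i j * A j k) = (if i = k then 1 else 0))"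

definition invertible_on :: "nat \<Rightarrow> rmat \<Rightarrow> bool" where
  "invertible_on n A \<longleftrightarrow> (\<exists>B. is_inverse_on n A B)"

definition inv_on :: "nat \<Rightarrow> rmat \<Rightarrow> rmat" where
  "inv_on n A = (SOME B. is_inverse_on n A B)"

definition matvec :: "nat \<Rightarrow> rmat \<Rightarrow> rvec \<Rightarrow> rvec" where
  "matvec n A v i = (\<Sum>k=1..n. A i k * v k)"

definition Gfun :: "nat \<Rightarrow> real \<Rightarrow> (nat \<Rightarrow> real) \<Rightarrow> rvec \<Rightarrow> state \<Rightarrow> state" where
  "Gfun m L w F UV =
     (let h = L / real m; U = fst UV; V = snd UV in
      ((\<lambda>i. (1 / h) * matvec (m - 1) (inv_on (m - 1) (Mstar L h w)) V i),
       (\<lambda>i. - (1 / h) * matvec (m - 1) (Sstar L h) U i + F i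
             + (1 / h) * (if i = 1 then max (U 1) 0 else 0))))"

definition snorm :: "nat \<Rightarrow> state \<Rightarrow> real" where
  "snorm m UV = sqrt (\<Sum>i=1..m-1. (fst UV i)\<^sup>2 + (snd UV i)\<^sup>2)"

definition sdiff :: "state \<Rightarrow> state \<Rightarrow> state" where
  "sdiff A B = ((\<lambda>i. fst A i - fst B i), (\<lambda>i. snd A i - snd B i))"

definition is_solution :: "nat \<Rightarrow> real \<Rightarrow> real \<Rightarrow> (nat \<Rightarrow> real) \<Rightarrow> rvec \<Rightarrow> rvec \<Rightarrow> rvec
    \<Rightarrow> (real \<Rightarrow> state) \<Rightarrow> bool" where
  "is_solution m L T w F U0 V0 Uh \<longleftrightarrow>
     (\<forall>i\<in>{1..m-1}. fst (Uh 0) i = U0 i \<and> snd (Uh 0) i = V0 i) \<and>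
     (\<forall>t\<in>{0..T}. \<forall>i\<in>{1..m-1}.
        ((\<lambda>s. fst (Uh s) i) has_real_derivative fst (Gfun m L w F (Uh t)) i) (at t within {0..T}) \<and>
        ((\<lambda>s. snd (Uh s) i) has_real_derivative snd (Gfun m L w F (Uh t)) i) (at t within {0..T}))"

definition is_CN_seq :: "nat \<Rightarrow> real \<Rightarrow> real \<Rightarrow> (nat \<Rightarrow> real) \<Rightarrow> rvec \<Rightarrow> (real \<Rightarrow> state)
    \<Rightarrow> nat \<Rightarrow> (nat \<Rightarrow> state) \<Rightarrow> bool" where
  "is_CN_seq m L T w F Uh N Us \<longleftrightarrow>
     (let dt = T / real N in
      (\<forall>i\<in>{1..m-1}. fst (Us 0) i = fst (Uh 0) i \<and> snd (Us 0) i = snd (Uh 0) i) \<and>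
      (\<forall>n<N. \<forall>i\<in>{1..m-1}.
         (fst (Us (Suc n)) i - fst (Us n) i) / dt
           = (1/2) * (fst (Gfun m L w F (Us (Suc n))) i + fst (Gfun m L w F (Us n)) i) \<and>
         (snd (Us (Suc n)) i - snd (Us n) i) / dt
           = (1/2) * (snd (Gfun m L w F (Us (Suc n))) i + snd (Gfun m L w F (Us n)) i)))"

end

theory Submission
  imports Defs
begin



definition N1 :: "nat \<Rightarrow> state \<Rightarrow> real" where
  "N1 d x = (\<Sum>i=1..d. \<bar>fst x i\<bar> + \<bar>snd x i\<bar>)"

lemma N1_nonneg: "0 \<le> N1 d x"
  unfolding N1_def by (intro sum_nonneg) auto

lemma sum_sq_le:
  fixes c :: "nat \<Rightarrow> real"
  assumes "finite A" "\<forall>i\<in>A. 0 \<le> c i"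
  shows "(\<Sum>i\<in>A. (c i)^2) \<le> (\<Sum>i\<in>A. c i)^2"
  using assms
proof (induction A rule: finite_induct)
  case empty then show ?case by simp
next
  case (insert x F)
  have "0 \<le> sum c F" using insert by (intro sum_nonneg) auto
  moreover have "0 \<le> c x" using insert by auto
  ultimately have "0 \<le> 2 * c x * sum c F" by simp
  then show ?case using insert by (simp add: power2_eq_square algebra_simps)
qed

lemma snorm_le_N1: "snorm m x \<le> N1 (m-1) x"
proof -
  have "(\<Sum>i=1..m-1. (fst x i)\<^sup>2 + (snd x i)\<^sup>2) \<le> (\<Sum>i=1..m-1. (\<bar>fst x i\<bar> + \<bar>snd x i\<bar>)\<^sup>2)"
    by (intro sum_mono) (simp add: power2_eq_square algebra_simps)
  also have "\<dots> \<le> (N1 (m-1) x)^2" unfolding N1_def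
    by (rule sum_sq_le) auto
  finally show ?thesis unfolding snorm_def
    using N1_nonneg real_sqrt_le_mono real_sqrt_abs by (metis abs_of_nonneg)
qed

lemma comp_le_N1:
  assumes "i \<in> {1..d}"
  shows "\<bar>fst x i\<bar> \<le> N1 d x" "\<bar>snd x i\<bar> \<le> N1 d x"
proof -
  have "\<bar>fst x i\<bar> + \<bar>snd x i\<bar> \<le> N1 d x" unfolding N1_def
    using assms by (intro member_le_sum) auto
  then show "\<bar>fst x i\<bar> \<le> N1 d x" "\<bar>snd x i\<bar> \<le> N1 d x" by auto
qed

lemma N1_tri: "N1 d x \<le> N1 d y + N1 d (sdiff x y)"
proof -
  have "N1 d x \<le> (\<Sum>i=1..d. (\<bar>fst y i\<bar> + \<bar>snd y i\<bar>) + (\<bar>fst x i - fst y i\<bar> + \<bar>snd x i - snd y i\<bar>))"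
    unfolding N1_def by (intro sum_mono) auto
  then show ?thesis unfolding N1_def sdiff_def by (simp add: sum.distrib)
qed

lemma N1_comb:
  assumes "c \<ge> 0"
    and "\<And>i. i \<in> {1..d} \<Longrightarrow> \<bar>fst x i\<bar> \<le> \<bar>fst a i\<bar> + \<bar>fst b i\<bar> + c * (\<bar>fst p i\<bar> + \<bar>fst q i\<bar>)"
    and "\<And>i. i \<in> {1..d} \<Longrightarrow> \<bar>snd x i\<bar> \<le> \<bar>snd a i\<bar> + \<bar>snd b i\<bar> + c * (\<bar>snd p i\<bar> + \<bar>snd q i\<bar>)"
  shows "N1 d x \<le> N1 d a + N1 d b + c * (N1 d p + N1 d q)"
proof -
  have "N1 d x \<le> (\<Sum>i=1..d. (\<bar>fst a i\<bar> + \<bar>snd a i\<bar>) + (\<bar>fst b i\<bar> + \<bar>snd b i\<bar>)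
      + c * ((\<bar>fst p i\<bar> + \<bar>snd p i\<bar>) + (\<bar>fst q i\<bar> + \<bar>snd q i\<bar>)))"
    unfolding N1_def
  proof (intro sum_mono)
    fix i assume "i \<in> {1..d}"
    from assms(2)[OF this] assms(3)[OF this] show "\<bar>fst x i\<bar> + \<bar>snd x i\<bar> \<le> (\<bar>fst a i\<bar> + \<bar>snd a i\<bar>) + (\<bar>fst b i\<bar> + \<bar>snd b i\<bar>) + c * ((\<bar>fst p i\<bar> + \<bar>snd p i\<bar>) + (\<bar>fst q i\<bar> + \<bar>snd q i\<bar>))"
      by (simp add: algebra_simps)
  qed
  also have "\<dots> = N1 d a + N1 d b + c * (N1 d p + N1 d q)"
    unfolding N1_def by (simp add: sum.distrib sum_distrib_left[symmetric])
  finally show ?thesis .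
qed



lemma matvec_bound:
  fixes A :: rmat
  assumes "finite I"
  shows "(\<Sum>i\<in>I. \<bar>\<Sum>k\<in>I. A i k * v k\<bar>) \<le> (\<Sum>i\<in>I. \<Sum>k\<in>I. \<bar>A i k\<bar>) * (\<Sum>k\<in>I. \<bar>v k\<bar>)"
proof -
  have "(\<Sum>i\<in>I. \<bar>\<Sum>k\<in>I. A i k * v k\<bar>) \<le> (\<Sum>i\<in>I. \<Sum>k\<in>I. \<bar>A i k\<bar> * (\<Sum>k\<in>I. \<bar>v k\<bar>))"
  proof (intro sum_mono)
    fix i assume "i \<in> I"
    have "\<bar>\<Sum>k\<in>I. A i k * v k\<bar> \<le> (\<Sum>k\<in>I. \<bar>A i k * v k\<bar>)" by (rule sum_abs)
    also have "\<dots> \<le> (\<Sum>k\<in>I. \<bar>A i k\<bar> * (\<Sum>k\<in>I. \<bar>v k\<bar>))"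
    proof (intro sum_mono)
      fix k assume "k \<in> I"
      then have "\<bar>v k\<bar> \<le> (\<Sum>k\<in>I. \<bar>v k\<bar>)" using assms by (intro member_le_sum) auto
      then show "\<bar>A i k * v k\<bar> \<le> \<bar>A i k\<bar> * (\<Sum>k\<in>I. \<bar>v k\<bar>)"
        by (simp add: abs_mult mult_left_mono)
    qed
    finally show "\<bar>\<Sum>k\<in>I. A i k * v k\<bar> \<le> (\<Sum>k\<in>I. \<bar>A i k\<bar> * (\<Sum>k\<in>I. \<bar>v k\<bar>))" .
  qed
  also have "\<dots> = (\<Sum>i\<in>I. \<Sum>k\<in>I. \<bar>A i k\<bar>) * (\<Sum>k\<in>I. \<bar>v k\<bar>)"
    by (simp add: sum_distrib_right)
  finally show ?thesis .
qed



lemma mvt_real: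
  fixes f g :: "real \<Rightarrow> real"
  assumes "a \<le> b" "{a..b} \<subseteq> S" "\<And>t. t \<in> S \<Longrightarrow> (f has_real_derivative g t) (at t within S)"
  shows "\<exists>x\<in>{a..b}. f b - f a = g x * (b - a)"
proof -
  have d: "(f has_derivative (\<lambda>h. g x * h)) (at x within {a..b})" if "a \<le> x" "x \<le> b" for x
  proof -
    have xS: "x \<in> S" using that assms(2) by auto
    have "(f has_real_derivative g x) (at x within {a..b})"
      using has_field_derivative_subset[OF assms(3)[OF xS] assms(2)] .
    then show ?thesis by (rule has_field_derivative_imp_has_derivative)
  qed
  from mvt_very_simple[of a b f "\<lambda>x h. g x * h", OF assms(1) d] show ?thesis by simp
qed
lemma trunc:
  fixes f g :: "real \<Rightarrow> real"
  assumes "a \<le> b" "{a..b} \<subseteq> S" "\<And>t. t \<in> S \<Longrightarrow> (f has_real_derivative g t) (at t within S)"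
    and "\<And>s t. a \<le> s \<Longrightarrow> s \<le> t \<Longrightarrow> t \<le> b \<Longrightarrow> \<bar>g t - g s\<bar> \<le> \<Lambda> * (t - s)"
  shows "\<bar>f b - f a - (b - a) / 2 * (g b + g a)\<bar> \<le> \<Lambda> * (b - a)^2 / 2"
proof -
  obtain x where x: "x \<in> {a..b}" "f b - f a = g x * (b - a)" using mvt_real[OF assms(1-3)] by blast
  have 1: "\<bar>g b - g x\<bar> \<le> \<Lambda> * (b - x)" "\<bar>g x - g a\<bar> \<le> \<Lambda> * (x - a)"
    using x assms(4) by auto
  have "f b - f a - (b - a) / 2 * (g b + g a) = (b - a) / 2 * ((g x - g b) + (g x - g a))"
    using x by (simp add: algebra_simps)
  also have "\<bar>\<dots>\<bar> = (b - a) / 2 * \<bar>(g x - g b) + (g x - g a)\<bar>"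
    using assms(1) by (simp add: abs_mult)
  also have "\<dots> \<le> (b - a) / 2 * (\<Lambda> * (b - x) + \<Lambda> * (x - a))"
    using 1 assms(1) by (intro mult_left_mono) auto
  also have "\<dots> = \<Lambda> * (b - a)^2 / 2" by (simp add: power2_eq_square algebra_simps)
  finally show ?thesis .
qed



lemma abs4:
  fixes A B P Q c :: real
  assumes "0 \<le> c"
  shows "\<bar>A + B + c * (P + Q)\<bar> \<le> \<bar>A\<bar> + \<bar>B\<bar> + c * (\<bar>P\<bar> + \<bar>Q\<bar>)"
proof -
  have "\<bar>c * (P + Q)\<bar> = c * \<bar>P + Q\<bar>" using assms by (simp add: abs_mult)
  also have "\<dots> \<le> c * (\<bar>P\<bar> + \<bar>Q\<bar>)" using assms by (intro mult_left_mono abs_triangle_ineq)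
  finally show ?thesis by (smt (verit))
qed

lemma disc_gronwall:
  fixes E :: "nat \<Rightarrow> real"
  assumes "E 0 = 0" "\<And>n. 0 \<le> E n" "0 \<le> a" "a \<le> 1/2" "0 \<le> q"
    and rec: "\<And>n. n < N \<Longrightarrow> E (Suc n) \<le> E n + a * (E (Suc n) + E n) + q"
  shows "n \<le> N \<Longrightarrow> E n \<le> real n * (2 * q) * exp (4 * a * real n)"
proof (induction n)
  case 0 then show ?case using assms(1) by simp
next
  case (Suc n)
  then have nN: "n < N" by simp
  have IH: "E n \<le> real n * (2 * q) * exp (4 * a * real n)" using Suc by simp
  have 1: "(1 - a) * E (Suc n) \<le> (1 + a) * E n + q" using rec[OF nN] by (simp add: algebra_simps)
  have "0 \<le> (1 - 2*a) * (2 * a * E n + q)" using assms(2)[of n] assms(3-5)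
    by (intro mult_nonneg_nonneg) auto
  moreover have "(1 - a) * ((1 + 4*a) * E n + 2*q) - ((1 + a) * E n + q) = (1 - 2*a) * (2 * a * E n + q)"
    by (simp add: algebra_simps)
  ultimately have 2: "(1 + a) * E n + q \<le> (1 - a) * ((1 + 4*a) * E n + 2*q)"
    by linarith
  have "(1 - a) * E (Suc n) \<le> (1 - a) * ((1 + 4*a) * E n + 2*q)" using 1 2 by linarith
  then have 3: "E (Suc n) \<le> (1 + 4*a) * E n + 2*q"
    using assms(4) mult_le_cancel_left_pos[of "1 - a"] by simp
  have "(1 + 4*a) * E n \<le> exp (4*a) * (real n * (2 * q) * exp (4 * a * real n))"
    using IH assms(2)[of n] assms(3) exp_ge_add_one_self[of "4*a"]
    by (intro mult_mono) auto
  moreover have "2*q \<le> 2*q * exp (4 * a * real (Suc n))"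
  proof -
    have "1 \<le> exp (4 * a * real (Suc n))" using assms(3) by simp
    from mult_left_mono[OF this, of "2*q"] show ?thesis using assms(5) by simp
  qed
  ultimately have "E (Suc n) \<le> exp (4*a) * (real n * (2 * q) * exp (4 * a * real n)) + 2*q * exp (4 * a * real (Suc n))"
    using 3 by linarith
  also have "\<dots> = real (Suc n) * (2 * q) * exp (4 * a * real (Suc n))"
  proof -
    have e: "exp (4 * a * real (Suc n)) = exp (4*a) * exp (4 * a * real n)"
      by (subst exp_add[symmetric]) (simp add: algebra_simps)
    show ?thesis unfolding e by (simp add: algebra_simps)
  qed
  finally show ?case .
qed


definition CG :: "nat \<Rightarrow> real \<Rightarrow> (nat \<Rightarrow> real) \<Rightarrow> real" where
  "CG m L w = (real m / L) * ((\<Sum>i=1..m-1. \<Sum>k=1..m-1. \<bar>inv_on (m-1) (Mstar L (L / real m) w) i k\<bar>)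
      + (\<Sum>i=1..m-1. \<Sum>k=1..m-1. \<bar>Sstar L (L / real m) i k\<bar>) + 1)"

lemma CG_pos: "m > 1 \<Longrightarrow> L > 0 \<Longrightarrow> CG m L w > 0"
  unfolding CG_def
  by (intro mult_pos_pos add_nonneg_pos add_nonneg_nonneg sum_nonneg) auto

lemma G_lip:
  assumes "m > 1" "L > 0"
  shows "N1 (m-1) (sdiff (Gfun m L w F x) (Gfun m L w F y)) \<le> CG m L w * N1 (m-1) (sdiff x y)"
proof -
  define h where "h = L / real m"
  define d where "d = m - 1"
  define B where "B = inv_on (m-1) (Mstar L (L / real m) w)"
  define S where "S = Sstar L (L / real m)"
  define dU where "dU = (\<lambda>k. fst x k - fst y k)"
  define dV where "dV = (\<lambda>k. snd x k - snd y k)"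
  define bB where "bB = (\<Sum>i=1..d. \<Sum>k=1..d. \<bar>B i k\<bar>)"
  define sS where "sS = (\<Sum>i=1..d. \<Sum>k=1..d. \<bar>S i k\<bar>)"
  define sU where "sU = (\<Sum>k=1..d. \<bar>dU k\<bar>)"
  define sV where "sV = (\<Sum>k=1..d. \<bar>dV k\<bar>)"
  have hpos: "h > 0" using assms by (simp add: h_def)
  have d1: "1 \<in> {1..d}" using assms by (simp add: d_def)
  have ih: "1 / h = real m / L" by (simp add: h_def)
  have fstG: "fst (sdiff (Gfun m L w F x) (Gfun m L w F y)) i = (1/h) * (\<Sum>k=1..d. B i k * dV k)" for i
    unfolding Gfun_def sdiff_def matvec_def Let_def dV_def h_def B_def d_def
    by (simp add: right_diff_distrib sum_subtractf)
  have sndG: "snd (sdiff (Gfun m L w F x) (Gfun m L w F y)) i =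
     -(1/h) * (\<Sum>k=1..d. S i k * dU k) + (1/h) * (if i = 1 then max (fst x 1) 0 - max (fst y 1) 0 else 0)" for i
    unfolding Gfun_def sdiff_def matvec_def Let_def dU_def h_def S_def d_def
    by (simp add: right_diff_distrib sum_subtractf diff_divide_distrib)
  have s1: "(\<Sum>i=1..d. \<bar>fst (sdiff (Gfun m L w F x) (Gfun m L w F y)) i\<bar>) \<le> (1/h) * (bB * sV)"
  proof -
    have "(\<Sum>i=1..d. \<bar>fst (sdiff (Gfun m L w F x) (Gfun m L w F y)) i\<bar>)
        = (\<Sum>i=1..d. (1/h) * \<bar>\<Sum>k=1..d. B i k * dV k\<bar>)"
      unfolding fstG abs_mult using hpos by simp
    also have "\<dots> = (1/h) * (\<Sum>i=1..d. \<bar>\<Sum>k=1..d. B i k * dV k\<bar>)"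
      by (rule sum_distrib_left[symmetric])
    also have "\<dots> \<le> (1/h) * (bB * sV)" unfolding bB_def sV_def
      using hpos by (intro mult_left_mono matvec_bound) auto
    finally show ?thesis .
  qed
  have s2: "(\<Sum>i=1..d. \<bar>snd (sdiff (Gfun m L w F x) (Gfun m L w F y)) i\<bar>) \<le> (1/h) * (sS * sU + sU)"
  proof -
    have "(\<Sum>i=1..d. \<bar>snd (sdiff (Gfun m L w F x) (Gfun m L w F y)) i\<bar>)
        \<le> (\<Sum>i=1..d. (1/h) * \<bar>\<Sum>k=1..d. S i k * dU k\<bar> + (1/h) * (if i = 1 then \<bar>dU 1\<bar> else 0))"
    proof (intro sum_mono)
      fix i :: nat
      have m: "\<bar>max (fst x 1) 0 - max (fst y 1) 0\<bar> \<le> \<bar>dU 1\<bar>" unfolding dU_def by linarith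
      have "\<bar>(1/h) * (if i = 1 then max (fst x 1) 0 - max (fst y 1) 0 else 0)\<bar>
          \<le> (1/h) * (if i = 1 then \<bar>dU 1\<bar> else 0)"
        using hpos m by (auto simp: abs_mult intro: mult_left_mono divide_right_mono)
      moreover have "\<bar>-(1/h) * (\<Sum>k=1..d. S i k * dU k)\<bar> = (1/h) * \<bar>\<Sum>k=1..d. S i k * dU k\<bar>"
        using hpos by (simp add: abs_mult)
      ultimately show "\<bar>snd (sdiff (Gfun m L w F x) (Gfun m L w F y)) i\<bar> \<le> (1/h) * \<bar>\<Sum>k=1..d. S i k * dU k\<bar> + (1/h) * (if i = 1 then \<bar>dU 1\<bar> else 0)"
        unfolding sndG by (smt (verit))
    qed
    also have "\<dots> = (1/h) * (\<Sum>i=1..d. \<bar>\<Sum>k=1..d. S i k * dU k\<bar>) + (1/h) * \<bar>dU 1\<bar>"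
    proof -
      have "(\<Sum>i=1..d. (1/h) * (if i = 1 then \<bar>dU 1\<bar> else 0)) = (1/h) * (\<Sum>i=1..d. (if i = 1 then \<bar>dU 1\<bar> else 0))"
        by (rule sum_distrib_left[symmetric])
      also have "(\<Sum>i=1..d. (if i = 1 then \<bar>dU 1\<bar> else 0)) = \<bar>dU 1\<bar>"
        using d1 by (simp add: sum.delta)
      finally have e2: "(\<Sum>i=1..d. (1/h) * (if i = 1 then \<bar>dU 1\<bar> else 0)) = (1/h) * \<bar>dU 1\<bar>" .
      have e1: "(\<Sum>i=1..d. (1/h) * \<bar>\<Sum>k=1..d. S i k * dU k\<bar>) = (1/h) * (\<Sum>i=1..d. \<bar>\<Sum>k=1..d. S i k * dU k\<bar>)"
        by (rule sum_distrib_left[symmetric])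
      show ?thesis by (simp only: sum.distrib e1 e2)
    qed
    also have "\<dots> \<le> (1/h) * (sS * sU) + (1/h) * sU"
    proof (intro add_mono mult_left_mono)
      show "(\<Sum>i=1..d. \<bar>\<Sum>k=1..d. S i k * dU k\<bar>) \<le> sS * sU" unfolding sS_def sU_def
        by (intro matvec_bound) auto
      show "\<bar>dU 1\<bar> \<le> sU" unfolding sU_def using d1 by (intro member_le_sum) auto
    qed (use hpos in auto)
    finally show ?thesis by (simp add: algebra_simps)
  qed
  have N1xy: "N1 d (sdiff x y) = sU + sV"
    unfolding N1_def sdiff_def sU_def sV_def dU_def dV_def by (simp add: sum.distrib)
  have nn: "0 \<le> bB" "0 \<le> sS" "0 \<le> sU" "0 \<le> sV"
    unfolding bB_def sS_def sU_def sV_def by (auto intro!: sum_nonneg)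
  have "N1 d (sdiff (Gfun m L w F x) (Gfun m L w F y)) \<le> (1/h) * (bB * sV) + (1/h) * (sS * sU + sU)"
    using s1 s2 unfolding N1_def by (simp add: sum.distrib)
  also have "\<dots> \<le> (1/h) * ((bB + sS + 1) * (sU + sV))"
  proof -
    have "bB * sV + (sS * sU + sU) \<le> (bB + sS + 1) * (sU + sV)"
      using nn by (simp add: algebra_simps)
    then have "(1/h) * (bB * sV + (sS * sU + sU)) \<le> (1/h) * ((bB + sS + 1) * (sU + sV))"
      using hpos by (intro mult_left_mono) auto
    then show ?thesis by (simp only: distrib_left)
  qed
  also have "\<dots> = CG m L w * N1 d (sdiff x y)"
    unfolding N1xy unfolding CG_def ih bB_def sS_def B_def S_def d_def by simp
  finally show ?thesis unfolding d_def .
qed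


theorem lemma3p1:
  fixes m :: nat and L T :: real and w :: "nat \<Rightarrow> real"
    and F U0 V0 :: rvec and Uh :: "real \<Rightarrow> state"
  assumes "m > 1" and "L > 0" and "T > 0"
    and "w 0 = 0"
    and "invertible_on (m - 1) (Mstar L (L / real m) w)"
    and "is_solution m L T w F U0 V0 Uh"
  shows "\<exists>\<delta>>0. \<exists>K>0. \<forall>N::nat. \<forall>Us :: nat \<Rightarrow> state.
           N > 0 \<longrightarrow> T / real N < \<delta> \<longrightarrow> is_CN_seq m L T w F Uh N Us \<longrightarrow>
           (\<forall>n\<le>N. snorm m (sdiff (Uh (real n * (T / real N))) (Us n)) \<le> K * (T / real N))"
proof -
  define d where "d = m - 1"
  define G where "G = Gfun m L w F"
  define C where "C = CG m L w"
  have Cpos: "C > 0" unfolding C_def using CG_pos assms by blast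
  have lip: "\<And>x y. N1 d (sdiff (G x) (G y)) \<le> C * N1 d (sdiff x y)"
    unfolding d_def G_def C_def using G_lip[OF assms(1,2)] by blast
  have der1: "\<And>t i. t \<in> {0..T} \<Longrightarrow> i \<in> {1..d} \<Longrightarrow>
      ((\<lambda>s. fst (Uh s) i) has_real_derivative fst (G (Uh t)) i) (at t within {0..T})"
   and der2: "\<And>t i. t \<in> {0..T} \<Longrightarrow> i \<in> {1..d} \<Longrightarrow>
      ((\<lambda>s. snd (Uh s) i) has_real_derivative snd (G (Uh t)) i) (at t within {0..T})"
    using assms(6) unfolding is_solution_def d_def G_def by blast+
  have cont1: "continuous_on {0..T} (\<lambda>s. fst (Uh s) i)" if "i \<in> {1..d}" for i
    unfolding continuous_on_eq_continuous_within using der1[OF _ that] DERIV_continuous by blast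
  have cont2: "continuous_on {0..T} (\<lambda>s. snd (Uh s) i)" if "i \<in> {1..d}" for i
    unfolding continuous_on_eq_continuous_within using der2[OF _ that] DERIV_continuous by blast
  have cont: "continuous_on {0..T} (\<lambda>t. N1 d (Uh t))"
    unfolding N1_def
    by (intro continuous_on_sum continuous_on_add continuous_on_rabs cont1 cont2) auto
  obtain t0 where t0: "t0 \<in> {0..T}" "\<And>t. t \<in> {0..T} \<Longrightarrow> N1 d (Uh t) \<le> N1 d (Uh t0)"
    using continuous_attains_sup[OF compact_Icc _ cont] assms(3) by fastforce
  define R where "R = N1 d (Uh t0)"
  define z :: state where "z = (\<lambda>_. 0, \<lambda>_. 0)"
  define B where "B = N1 d (G z) + C * R"
  have GB: "N1 d (G (Uh t)) \<le> B" if "t \<in> {0..T}" for t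
  proof -
    have "N1 d (G (Uh t)) \<le> N1 d (G z) + N1 d (sdiff (G (Uh t)) (G z))" by (rule N1_tri)
    also have "\<dots> \<le> N1 d (G z) + C * N1 d (sdiff (Uh t) z)" using lip by (intro add_left_mono) auto
    also have "N1 d (sdiff (Uh t) z) = N1 d (Uh t)" by (simp add: N1_def sdiff_def z_def)
    also have "C * N1 d (Uh t) \<le> C * R" unfolding R_def using t0(2)[OF that] Cpos by simp
    finally show ?thesis unfolding B_def by simp
  qed
  have Bnn: "0 \<le> B" using GB[of 0] N1_nonneg[of d "G (Uh 0)"] assms(3) by auto
  have compB: "\<bar>fst (G (Uh t)) i\<bar> \<le> B" "\<bar>snd (G (Uh t)) i\<bar> \<le> B" if "t \<in> {0..T}" "i \<in> {1..d}" for t i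
    using comp_le_N1[OF that(2), of "G (Uh t)"] GB[OF that(1)] by auto
  have lipU: "N1 d (sdiff (Uh b) (Uh a)) \<le> 2 * real d * B * (b - a)" if "0 \<le> a" "a \<le> b" "b \<le> T" for a b
  proof -
    have sub: "{a..b} \<subseteq> {0..T}" using that by auto
    have c1: "\<bar>fst (Uh b) i - fst (Uh a) i\<bar> \<le> B * (b - a)" if i: "i \<in> {1..d}" for i
    proof -
      obtain x where x: "x \<in> {a..b}" "fst (Uh b) i - fst (Uh a) i = fst (G (Uh x)) i * (b - a)"
        using mvt_real[OF \<open>a \<le> b\<close> sub, of "\<lambda>s. fst (Uh s) i" "\<lambda>t. fst (G (Uh t)) i"] der1[OF _ i] by blast
      have "\<bar>fst (G (Uh x)) i\<bar> \<le> B" using compB x(1) sub i by auto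
      then show ?thesis unfolding x(2) abs_mult using \<open>a \<le> b\<close> by (simp add: mult_right_mono)
    qed
    have c2: "\<bar>snd (Uh b) i - snd (Uh a) i\<bar> \<le> B * (b - a)" if i: "i \<in> {1..d}" for i
    proof -
      obtain x where x: "x \<in> {a..b}" "snd (Uh b) i - snd (Uh a) i = snd (G (Uh x)) i * (b - a)"
        using mvt_real[OF \<open>a \<le> b\<close> sub, of "\<lambda>s. snd (Uh s) i" "\<lambda>t. snd (G (Uh t)) i"] der2[OF _ i] by blast
      have "\<bar>snd (G (Uh x)) i\<bar> \<le> B" using compB x(1) sub i by auto
      then show ?thesis unfolding x(2) abs_mult using \<open>a \<le> b\<close> by (simp add: mult_right_mono)
    qed
    have "N1 d (sdiff (Uh b) (Uh a)) \<le> (\<Sum>i=1..d. B * (b - a) + B * (b - a))"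
      unfolding N1_def sdiff_def using c1 c2 by (intro sum_mono add_mono) auto
    also have "\<dots> = 2 * real d * B * (b - a)" by simp
    finally show ?thesis .
  qed
  define \<Lambda> where "\<Lambda> = C * (2 * real d * B)"
  have Lnn: "0 \<le> \<Lambda>" unfolding \<Lambda>_def using Cpos Bnn by simp
  have lipG: "\<bar>fst (G (Uh b)) i - fst (G (Uh a)) i\<bar> \<le> \<Lambda> * (b - a) \<and>
              \<bar>snd (G (Uh b)) i - snd (G (Uh a)) i\<bar> \<le> \<Lambda> * (b - a)"
    if "0 \<le> a" "a \<le> b" "b \<le> T" "i \<in> {1..d}" for a b i
  proof -
    have "N1 d (sdiff (G (Uh b)) (G (Uh a))) \<le> C * N1 d (sdiff (Uh b) (Uh a))" by (rule lip)
    also have "\<dots> \<le> C * (2 * real d * B * (b - a))"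
      using lipU[OF that(1-3)] Cpos by (intro mult_left_mono) auto
    finally have "N1 d (sdiff (G (Uh b)) (G (Uh a))) \<le> \<Lambda> * (b - a)" unfolding \<Lambda>_def by simp
    then show ?thesis using comp_le_N1[OF that(4), of "sdiff (G (Uh b)) (G (Uh a))"]
      by (simp add: sdiff_def)
  qed
  have tau1: "\<bar>fst (Uh b) i - fst (Uh a) i - (b - a) / 2 * (fst (G (Uh b)) i + fst (G (Uh a)) i)\<bar> \<le> \<Lambda> * (b - a)^2 / 2"
    and tau2: "\<bar>snd (Uh b) i - snd (Uh a) i - (b - a) / 2 * (snd (G (Uh b)) i + snd (G (Uh a)) i)\<bar> \<le> \<Lambda> * (b - a)^2 / 2"
    if "0 \<le> a" "a \<le> b" "b \<le> T" "i \<in> {1..d}" for a b i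
  proof -
    have sub: "{a..b} \<subseteq> {0..T}" using that by auto
    show "\<bar>fst (Uh b) i - fst (Uh a) i - (b - a) / 2 * (fst (G (Uh b)) i + fst (G (Uh a)) i)\<bar> \<le> \<Lambda> * (b - a)^2 / 2"
      using trunc[OF that(2) sub, of "\<lambda>s. fst (Uh s) i" "\<lambda>t. fst (G (Uh t)) i" \<Lambda>] der1[OF _ that(4)]
        lipG[OF _ _ _ that(4)] that by auto
    show "\<bar>snd (Uh b) i - snd (Uh a) i - (b - a) / 2 * (snd (G (Uh b)) i + snd (G (Uh a)) i)\<bar> \<le> \<Lambda> * (b - a)^2 / 2"
      using trunc[OF that(2) sub, of "\<lambda>s. snd (Uh s) i" "\<lambda>t. snd (G (Uh t)) i" \<Lambda>] der2[OF _ that(4)]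
        lipG[OF _ _ _ that(4)] that by auto
  qed
  define K where "K = 2 * real d * \<Lambda> * T * exp (2 * C * T) + 1"
  have Kpos: "K > 0" unfolding K_def using Lnn assms(3) by (simp add: add_nonneg_pos)
  have main: "snorm m (sdiff (Uh (real n * (T / real N))) (Us n)) \<le> K * (T / real N)"
    if N: "N > 0" "T / real N < 1 / C" "is_CN_seq m L T w F Uh N Us" "n \<le> N" for N Us n
  proof -
    define dt where "dt = T / real N"
    have dtpos: "dt > 0" unfolding dt_def using N(1) assms(3) by simp
    have dtC: "dt * C < 1" using N(2) Cpos unfolding dt_def by (simp add: field_simps)
    define tt where "tt k = real k * dt" for k
    have us0: "\<And>i. i \<in> {1..d} \<Longrightarrow> fst (Us 0) i = fst (Uh 0) i \<and> snd (Us 0) i = snd (Uh 0) i"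
      using N(3) unfolding is_CN_seq_def Let_def d_def by blast
    have step: "\<And>k i. k < N \<Longrightarrow> i \<in> {1..d} \<Longrightarrow>
         (fst (Us (Suc k)) i - fst (Us k) i) / dt = (1/2) * (fst (G (Us (Suc k))) i + fst (G (Us k)) i) \<and>
         (snd (Us (Suc k)) i - snd (Us k) i) / dt = (1/2) * (snd (G (Us (Suc k))) i + snd (G (Us k)) i)"
      using N(3) unfolding is_CN_seq_def Let_def d_def G_def dt_def by blast
    have step1: "fst (Us (Suc k)) i - fst (Us k) i = dt/2 * (fst (G (Us (Suc k))) i + fst (G (Us k)) i)"
      and step2: "snd (Us (Suc k)) i - snd (Us k) i = dt/2 * (snd (G (Us (Suc k))) i + snd (G (Us k)) i)"
      if "k < N" "i \<in> {1..d}" for k i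
      using step[OF that] dtpos by (auto simp: field_simps)
    define E where "E k = N1 d (sdiff (Uh (tt k)) (Us k))" for k
    have E0: "E 0 = 0" unfolding E_def tt_def N1_def sdiff_def using us0 by (simp add: sum.neutral)
    have Enn: "\<And>k. 0 \<le> E k" unfolding E_def by (rule N1_nonneg)
    have ttT: "0 \<le> tt k \<and> tt k \<le> T" if "k \<le> N" for k
    proof -
      have "real k * (T / real N) \<le> real N * (T / real N)"
        using that assms(3) by (intro mult_right_mono) auto
      then show ?thesis unfolding tt_def dt_def using N(1) assms(3) by simp
    qed
    have rec: "E (Suc k) \<le> E k + (dt * C / 2) * (E (Suc k) + E k) + real d * \<Lambda> * dt^2" if k: "k < N" for k
    proof -
      define a where "a = tt k"
      define b where "b = tt (Suc k)"
      have ab: "0 \<le> a" "a \<le> b" "b \<le> T" "b - a = dt"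
        using ttT[of k] ttT[of "Suc k"] k dtpos unfolding a_def b_def tt_def by (auto simp: algebra_simps)
      define tauS :: state where "tauS = ((\<lambda>i. fst (Uh b) i - fst (Uh a) i - dt / 2 * (fst (G (Uh b)) i + fst (G (Uh a)) i)),
                         (\<lambda>i. snd (Uh b) i - snd (Uh a) i - dt / 2 * (snd (G (Uh b)) i + snd (G (Uh a)) i)))"
      have tauN: "N1 d tauS \<le> real d * \<Lambda> * dt^2"
      proof -
        have "N1 d tauS \<le> (\<Sum>i=1..d. \<Lambda> * dt^2 / 2 + \<Lambda> * dt^2 / 2)"
          unfolding N1_def tauS_def fst_conv snd_conv
          using tau1[OF ab(1-3)] tau2[OF ab(1-3)] ab(4) by (intro sum_mono add_mono) auto
        also have "\<dots> = real d * \<Lambda> * dt^2" by simp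
        finally show ?thesis .
      qed
      define p where "p = sdiff (G (Uh b)) (G (Us (Suc k)))"
      define q where "q = sdiff (G (Uh a)) (G (Us k))"
      have comb: "E (Suc k) \<le> E k + N1 d tauS + dt / 2 * (N1 d p + N1 d q)"
        unfolding E_def a_def[symmetric] b_def[symmetric]
      proof (rule N1_comb)
        show "0 \<le> dt / 2" using dtpos by simp
      next
        fix i assume i: "i \<in> {1..d}"
        have "fst (sdiff (Uh b) (Us (Suc k))) i = fst (sdiff (Uh a) (Us k)) i + fst tauS i + dt / 2 * (fst p i + fst q i)"
          using step1[OF k i] unfolding sdiff_def tauS_def p_def q_def by (simp add: algebra_simps)
        then show "\<bar>fst (sdiff (Uh b) (Us (Suc k))) i\<bar> \<le> \<bar>fst (sdiff (Uh a) (Us k)) i\<bar> + \<bar>fst tauS i\<bar> + dt / 2 * (\<bar>fst p i\<bar> + \<bar>fst q i\<bar>)"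
          using abs4[of "dt/2"] dtpos by simp
      next
        fix i assume i: "i \<in> {1..d}"
        have "snd (sdiff (Uh b) (Us (Suc k))) i = snd (sdiff (Uh a) (Us k)) i + snd tauS i + dt / 2 * (snd p i + snd q i)"
          using step2[OF k i] unfolding sdiff_def tauS_def p_def q_def by (simp add: algebra_simps)
        then show "\<bar>snd (sdiff (Uh b) (Us (Suc k))) i\<bar> \<le> \<bar>snd (sdiff (Uh a) (Us k)) i\<bar> + \<bar>snd tauS i\<bar> + dt / 2 * (\<bar>snd p i\<bar> + \<bar>snd q i\<bar>)"
          using abs4[of "dt/2"] dtpos by simp
      qed
      have "N1 d p + N1 d q \<le> C * E (Suc k) + C * E k"
        unfolding p_def q_def E_def a_def b_def using lip by (intro add_mono) auto
      then have "dt / 2 * (N1 d p + N1 d q) \<le> dt / 2 * (C * E (Suc k) + C * E k)"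
        using dtpos by (intro mult_left_mono) auto
      moreover have "dt / 2 * (C * E (Suc k) + C * E k) = (dt * C / 2) * (E (Suc k) + E k)"
        by (simp add: algebra_simps)
      ultimately show ?thesis using comb tauN by linarith
    qed
    have gron: "E n \<le> real n * (2 * (real d * \<Lambda> * dt^2)) * exp (4 * (dt * C / 2) * real n)"
      using disc_gronwall[of E "dt * C / 2" "real d * \<Lambda> * dt^2" N, OF E0 Enn _ _ _ rec N(4)]
        dtpos Cpos dtC Lnn by auto
    have ndt: "0 \<le> real n * dt" "real n * dt \<le> T" using ttT[OF N(4)] unfolding tt_def by auto
    have ex: "exp (2 * C * (real n * dt)) \<le> exp (2 * C * T)"
      using ndt Cpos by (simp add: mult_left_mono)
    have "real n * (2 * (real d * \<Lambda> * dt^2)) * exp (4 * (dt * C / 2) * real n)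
        = (real n * dt) * (2 * real d * \<Lambda> * dt) * exp (2 * C * (real n * dt))"
      by (simp add: power2_eq_square algebra_simps)
    also have "\<dots> \<le> T * (2 * real d * \<Lambda> * dt) * exp (2 * C * T)"
    proof -
      have n1: "0 \<le> 2 * real d * \<Lambda> * dt" using Lnn dtpos by simp
      have n2: "0 \<le> T * (2 * real d * \<Lambda> * dt)" using n1 assms(3) by simp
      have "(real n * dt) * (2 * real d * \<Lambda> * dt) \<le> T * (2 * real d * \<Lambda> * dt)"
        using ndt n1 by (intro mult_right_mono) auto
      then show ?thesis by (rule mult_mono[OF _ ex n2]) simp
    qed
    also have "\<dots> \<le> K * dt" unfolding K_def using dtpos by (simp add: algebra_simps)
    finally have "E n \<le> K * dt" using gron by linarith
    moreover have "snorm m (sdiff (Uh (real n * (T / real N))) (Us n)) \<le> E n"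
      unfolding E_def tt_def dt_def d_def by (rule snorm_le_N1)
    ultimately show ?thesis unfolding dt_def by linarith
  qed
  have "1 / C > 0" using Cpos by simp
  moreover have "\<forall>N::nat. \<forall>Us :: nat \<Rightarrow> state.
           N > 0 \<longrightarrow> T / real N < 1 / C \<longrightarrow> is_CN_seq m L T w F Uh N Us \<longrightarrow>
           (\<forall>n\<le>N. snorm m (sdiff (Uh (real n * (T / real N))) (Us n)) \<le> K * (T / real N))"
    by (intro allI impI) (rule main, assumption+)
  ultimately show ?thesis using Kpos by blast
qed

end
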